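(* Let $p\geq3$, $k\geq1$ be integers. There exists $\tilde\lambda_c=\tilde\lambda_c(p,k)$ such that for every $\lambda\geq\tilde\lambda_c$, $$\sup_{m\in[0,m_\lambda]}S_{p,k}(m,x_* )<0.$$
   Context: For $\lambda>0$: $m_\lambda=\min\left\{1,\left(\frac{(p-2)\sqrt p}{\lambda\sqrt{p-1}}\right)^{1/k}\right\}$; $m_*=m_*(\lambda)$ is the largest solution $m\in(0,1]$ of $\lambda m^k/\sqrt p=m^2/\sqrt{1-m^2}$; $x_*=\lambda m_*^k\left(\frac12-\frac1k\right)-\sqrt{\frac{\lambda^2m_*^{2k}}{4}+p}$. $I_1(z)=\int_{\sqrt2}^z\sqrt{t^2-2}\,dt$ for $z\ge\sqrt2$, $I_1(z)=+\infty$ for $z<\sqrt2$; $\tilde S_{p,k}(m,y)=\tfrac12\log((1-m^2)(p-1))+\tfrac{2-p}{2p}y^2-\tfrac{\lambda m^k}{p}\sqrt{\tfrac{2(p-1)}{p}}\,y-\tfrac{\lambda^2m^{2k-2}}{2p^2}(p+(1-p)m^2)-I_1(-y)$; $y(x,m)=\frac{px-(1-p/k)\lambda m^k}{\sqrt{2p(p-1)}}$; $S_{p,k}(m,x)=\tilde S_{p,k}(m,y(x,m))$. *)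

theory Defs
  imports "HOL-Analysis.Analysis" "HOL-Library.Extended_Real"
begin

definition m_lambda :: "nat \<Rightarrow> nat \<Rightarrow> real \<Rightarrow> real" where
  "m_lambda p k lam = min 1 (root k ((real p - 2) * sqrt (real p) / (lam * sqrt (real p - 1))))"

definition m_star :: "nat \<Rightarrow> nat \<Rightarrow> real \<Rightarrow> real" where
  "m_star p k lam = (GREATEST m. 0 < m \<and> m \<le> 1 \<and>
      lam * m ^ k / sqrt (real p) = m\<^sup>2 / sqrt (1 - m\<^sup>2))"

definition x_star :: "nat \<Rightarrow> nat \<Rightarrow> real \<Rightarrow> real" where
  "x_star p k lam = (let ms = m_star p k lam in
      lam * ms ^ k * (1/2 - 1 / real k) - sqrt (lam\<^sup>2 * ms ^ (2*k) / 4 + real p))"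

definition I1 :: "real \<Rightarrow> ereal" where
  "I1 z = (if sqrt 2 \<le> z then ereal (integral {sqrt 2..z} (\<lambda>t. sqrt (t\<^sup>2 - 2))) else \<infinity>)"

definition S_tilde :: "nat \<Rightarrow> nat \<Rightarrow> real \<Rightarrow> real \<Rightarrow> real \<Rightarrow> ereal" where
  "S_tilde p k lam m y =
     ereal (ln ((1 - m\<^sup>2) * (real p - 1)) / 2
        + (2 - real p) / (2 * real p) * y\<^sup>2
        - lam * m ^ k / real p * sqrt (2 * (real p - 1) / real p) * y
        - lam\<^sup>2 * m ^ (2*k - 2) / (2 * (real p)\<^sup>2) * (real p + (1 - real p) * m\<^sup>2))
     - I1 (- y)"

definition y_fun :: "nat \<Rightarrow> nat \<Rightarrow> real \<Rightarrow> real \<Rightarrow> real \<Rightarrow> real" where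
  "y_fun p k lam x m = (real p * x - (1 - real p / real k) * lam * m ^ k)
      / sqrt (2 * real p * (real p - 1))"

definition S_pk :: "nat \<Rightarrow> nat \<Rightarrow> real \<Rightarrow> real \<Rightarrow> real \<Rightarrow> ereal" where
  "S_pk p k lam m x = S_tilde p k lam m (y_fun p k lam x m)"

end

theory Submission
  imports Defs
begin

lemma mstar_ge:
  fixes p k :: nat and lam d :: real
  assumes p3: "p \<ge> 3" and k1: "k \<ge> 1" and d0: "0 < d" and d1: "d \<le> 1/2"
    and lamb: "lam > sqrt p * 2^k / sqrt d"
  shows "m_star p k lam \<ge> sqrt (1-d) \<and> m_star p k lam < 1 \<and>
         lam * (m_star p k lam)^k = sqrt p * (m_star p k lam)^2 / sqrt (1 - (m_star p k lam)^2)"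
proof -
  define m0 where "m0 = sqrt (1-d)"
  have sp: "sqrt (real p) > 0" using p3 by simp
  have sd: "sqrt d > 0" using d0 by simp
  have "sqrt p * 2^k / sqrt d > 0" using sp sd by simp
  hence lam0: "lam > 0" using lamb by linarith
  have m0sq: "m0^2 = 1 - d" using d1 by (simp add: m0_def)
  have m0h: "m0 \<ge> 1/2"
  proof -
    have "(1/2::real)^2 \<le> m0^2" using m0sq d1 by (simp add: power2_eq_square)
    then show ?thesis using power2_le_imp_le[of "1/2" m0] d1 by (simp add: m0_def)
  qed
  have m0l: "m0 < 1" using d0 by (simp add: m0_def)
  define g where "g m = lam * m^k * sqrt (1-m^2) - sqrt p * m^2" for m :: real
  have "lam * sqrt d > sqrt p * 2^k" using lamb sd by (simp add: field_simps)
  hence "lam * sqrt d * (1/2)^k > sqrt p" by (simp add: field_simps)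
  moreover have "m0^k \<ge> (1/2)^k" by (rule power_mono[OF m0h]) simp
  hence "lam * sqrt d * m0^k \<ge> lam * sqrt d * (1/2)^k" using lam0 sd by simp
  moreover have "sqrt p * m0^2 \<le> sqrt p" using m0sq d0 sp by simp
  ultimately have g0: "g m0 > 0" unfolding g_def using m0sq d0
    by (simp add: mult.commute mult.left_commute)
  have g1: "g 1 < 0" using sp by (simp add: g_def)
  have cont: "continuous_on {m0..1} g" unfolding g_def by (intro continuous_intros)
  define Z where "Z = {m \<in> {m0..1}. g m = 0}"
  have "closed Z" unfolding Z_def by (rule continuous_closed_preimage_constant[OF cont]) simp
  moreover have "bounded Z" unfolding Z_def by (rule bounded_subset[of "{m0..1}"]) auto
  ultimately have cZ: "compact Z" by (simp add: compact_eq_bounded_closed)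
  obtain z where "m0 \<le> z" "z \<le> 1" "g z = 0" using IVT2'[of g 1 0 m0] g0 g1 cont m0l by auto
  hence "Z \<noteq> {}" unfolding Z_def by auto
  then obtain M where MZ: "M \<in> Z" and Mmax: "\<forall>t\<in>Z. t \<le> M" using compact_attains_sup[OF cZ] by blast
  have M1: "M < 1" using MZ g1 unfolding Z_def by (cases "M = 1") auto
  have Mm0: "M \<ge> m0" using MZ unfolding Z_def by auto
  have equiv: "(lam * m^k / sqrt p = m^2 / sqrt (1 - m^2)) \<longleftrightarrow> g m = 0" if "0 < m" "m < 1" for m
  proof -
    have "m^2 < 1^2" using that by (intro power_strict_mono) auto
    hence "1 - m^2 > 0" by simp
    hence s: "sqrt (1-m^2) > 0" by simp
    show ?thesis unfolding g_def using s sp by (auto simp: field_simps)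
  qed
  let ?P = "\<lambda>m. 0 < m \<and> m \<le> 1 \<and> lam * m ^ k / sqrt (real p) = m\<^sup>2 / sqrt (1 - m\<^sup>2)"
  have PM: "?P M" using equiv[of M] MZ M1 Mm0 m0h unfolding Z_def by auto
  have "y \<le> M" if "?P y" for y
  proof (cases "y \<le> m0")
    case True then show ?thesis using Mm0 by simp
  next
    case False
    have "y \<noteq> 1" using that lam0 sp by auto
    hence "g y = 0" using equiv[of y] that by auto
    hence "y \<in> Z" using False that unfolding Z_def by auto
    then show ?thesis using Mmax by auto
  qed
  hence ms: "m_star p k lam = M" unfolding m_star_def using PM by (intro Greatest_equality) auto
  have "M^2 < 1^2" using M1 Mm0 m0h by (intro power_strict_mono) auto
  hence "1 - M^2 > 0" by simp
  hence s: "sqrt (1-M^2) > 0" by simp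
  have "lam * M^k = sqrt p * M^2 / sqrt (1 - M^2)" using PM s sp by (auto simp: field_simps)
  then show ?thesis using ms M1 Mm0 m0_def by simp
qed

lemma quad_bound:
  fixes a b P Y :: real
  assumes a: "a > 0" and b: "b \<ge> 0" and P: "P \<ge> 0" and Y: "Y \<ge> 1 + 2*b/a + (P+2)/a"
  shows "P/2 - a*Y^2 + b*Y \<le> -1"
proof -
  have Y1: "Y \<ge> 1" using Y a b P by (smt (verit) divide_nonneg_pos)
  have "Y \<ge> 2*b/a" using Y a P by (smt (verit) divide_nonneg_pos)
  hence "a*Y \<ge> 2*b" using a by (simp add: field_simps)
  hence h1: "b*Y \<le> a*Y^2/2" using Y1 by (simp add: power2_eq_square)
  have "Y \<ge> (P+2)/a" using Y a b by (smt (verit) divide_nonneg_pos)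
  hence "a*Y \<ge> P+2" using a by (simp add: field_simps)
  hence "(P+2)*1 \<le> (a*Y)*Y" using Y1 P by (intro mult_mono) auto
  hence "a*Y^2 \<ge> P+2" by (simp add: power2_eq_square mult.assoc)
  then show ?thesis using h1 by linarith
qed

lemma ln_half_le:
  fixes x P :: real assumes "0 \<le> x" "x \<le> P" shows "ln x / 2 \<le> P/2"
proof (cases "x = 0")
  case True then show ?thesis using assms by simp
next
  case False then show ?thesis using ln_le_minus_one[of x] assms by simp
qed


lemma S_bound:
  fixes p k :: nat and lam m :: real
  assumes p3: "p \<ge> 3" and k1: "k \<ge> 1" and lam0: "lam > 0"
    and mI: "m \<in> {0..m_lambda p k lam}"
    and C0: "C0 = (real p - 2) * sqrt (real p) / sqrt (real p - 1)"
    and a: "a = (real p - 2) / (2 * real p)"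
    and b: "b = C0 * sqrt (2 * (real p - 1) / real p) / real p"
    and D: "D = sqrt (2 * real p * (real p - 1))"
    and Y0: "Y0 = 1 + sqrt 2 + 2*b/a + (real p+2)/a"
    and Abig: "lam * m_star p k lam ^ k \<ge> real k * (Y0 * D / real p + C0)"
  shows "S_pk p k lam m (x_star p k lam) \<le> ereal (-1)"
proof -
  define P where "P = real p"
  define K where "K = real k"
  have P3: "P \<ge> 3" using p3 by (simp add: P_def)
  have K1: "K \<ge> 1" using k1 by (simp add: K_def)
  have a0: "a > 0" using a P3 unfolding P_def by simp
  have C00: "C0 > 0" using C0 P3 unfolding P_def by simp
  have c0: "sqrt (2 * (P - 1) / P) \<ge> 0" using P3 by simp
  have b0: "b \<ge> 0" using b C00 c0 P3 unfolding P_def by simp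
  have D0: "D > 0" using D P3 unfolding P_def by simp
  have Y0ge: "Y0 \<ge> sqrt 2" using Y0 a0 b0 P3 unfolding P_def by (smt (verit) divide_nonneg_pos)
  have Y0pos: "Y0 \<ge> 0" using Y0ge by (smt (verit) real_sqrt_ge_zero)
  define A where "A = lam * m_star p k lam ^ k"
  have Abig': "A \<ge> K * (Y0 * D / P + C0)" using Abig unfolding A_def K_def P_def .
  have "K * (Y0 * D / P + C0) \<ge> 0" using K1 Y0pos D0 P3 C00 by simp
  hence A0: "A \<ge> 0" using Abig' by linarith
  define xs where "xs = x_star p k lam"
  have xsA: "xs = A * (1/2 - 1/K) - sqrt (A^2/4 + P)"
    unfolding xs_def x_star_def A_def K_def P_def Let_def
    by (simp add: power_mult_distrib power_mult[symmetric] mult.commute)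
  have "sqrt (A^2/4 + P) \<ge> sqrt (A^2/4)" using P3 by simp
  moreover have "sqrt (A^2/4) = A/2" using A0 by (simp add: real_sqrt_divide)
  ultimately have "xs \<le> A * (1/2 - 1/K) - A/2" using xsA by linarith
  also have "\<dots> = - A / K" by (simp add: field_simps)
  finally have xsle: "xs \<le> - A / K" .
  define B where "B = lam * m^k"
  have m0: "m \<ge> 0" using mI by simp
  have mle1: "m \<le> 1" using mI unfolding m_lambda_def by simp
  have "m \<le> root k ((P - 2) * sqrt P / (lam * sqrt (P - 1)))" using mI unfolding m_lambda_def P_def by simp
  hence "m^k \<le> (root k ((P - 2) * sqrt P / (lam * sqrt (P - 1))))^k" using m0 by (intro power_mono) auto
  also have "\<dots> = (P - 2) * sqrt P / (lam * sqrt (P - 1))" using k1 P3 lam0 by (intro real_root_pow_pos2) auto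
  also have "\<dots> = C0 / lam" using C0 unfolding P_def by simp
  finally have "m^k \<le> C0 / lam" .
  hence Ble: "B \<le> C0" using lam0 unfolding B_def by (simp add: field_simps)
  have B0: "B \<ge> 0" using lam0 m0 unfolding B_def by simp
  define y where "y = y_fun p k lam xs m"
  have ydef: "y = (P * xs - (1 - P / K) * B) / D"
    unfolding y_def y_fun_def P_def K_def B_def D by (simp add: mult.assoc)
  define Y where "Y = - y"
  have "P * xs \<le> P * (- A / K)" using xsle P3 by (intro mult_left_mono) auto
  hence "-(P * xs) \<ge> P * A / K" by simp
  moreover have "(1 - P/K) * B \<ge> - P * C0"
  proof -
    have "P * 1 \<le> P * K" using K1 P3 by (intro mult_left_mono) auto
    hence "P/K \<le> P" using K1 by (simp add: field_simps)
    hence "(1 - P/K) * B \<ge> (1 - P) * B" using B0 by (intro mult_right_mono) auto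
    moreover have "(1 - P) * B \<ge> - P * B" using B0 by (simp add: algebra_simps)
    moreover have "- P * B \<ge> - P * C0" using Ble P3 by simp
    ultimately show ?thesis by linarith
  qed
  ultimately have "-(P * xs) + (1 - P/K) * B \<ge> P * A / K - P * C0" by linarith
  moreover have "P * A / K - P * C0 \<ge> Y0 * D"
  proof -
    have "A / K \<ge> Y0 * D / P + C0" using Abig' K1 by (simp add: field_simps)
    hence "P * (A / K) \<ge> P * (Y0 * D / P + C0)" using P3 by (intro mult_left_mono) auto
    moreover have "P * (Y0 * D / P + C0) = Y0 * D + P * C0" using P3 by (simp add: field_simps)
    moreover have "P * (A / K) = P * A / K" by simp
    ultimately show ?thesis by linarith
  qed
  moreover have "Y * D = -(P * xs) + (1 - P/K) * B" unfolding Y_def ydef using D0 by simp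
  ultimately have "Y * D \<ge> Y0 * D" by (simp add: mult.commute)
  hence YY0: "Y \<ge> Y0" using D0 by simp
  have Ys2: "sqrt 2 \<le> Y" using YY0 Y0ge by linarith
  have Ypos: "Y \<ge> 0" using YY0 Y0pos by linarith
  define I where "I = integral {sqrt 2..Y} (\<lambda>t. sqrt (t\<^sup>2 - 2))"
  have "continuous_on {sqrt 2..Y} (\<lambda>t. sqrt (t\<^sup>2 - 2))" by (intro continuous_intros)
  hence "(\<lambda>t. sqrt (t\<^sup>2 - 2)) integrable_on {sqrt 2..Y}" by (rule integrable_continuous_interval)
  moreover have "0 \<le> sqrt (x\<^sup>2 - 2)" if "x \<in> {sqrt 2..Y}" for x
  proof -
    have "(sqrt 2)^2 \<le> x^2" using that by (intro power_mono) auto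
    thus ?thesis by simp
  qed
  ultimately have I0: "I \<ge> 0" unfolding I_def by (intro integral_nonneg) auto
  have I1eq: "I1 (- y) = ereal I" unfolding I1_def I_def Y_def using Ys2 Y_def by simp
  define R where "R = ln ((1 - m\<^sup>2) * (P - 1)) / 2
        + (2 - P) / (2 * P) * y\<^sup>2
        - lam * m ^ k / P * sqrt (2 * (P - 1) / P) * y
        - lam\<^sup>2 * m ^ (2*k - 2) / (2 * P\<^sup>2) * (P + (1 - P) * m\<^sup>2)"
  have Seq: "S_pk p k lam m (x_star p k lam) = ereal R - ereal I"
    unfolding S_pk_def S_tilde_def R_def P_def I1eq[symmetric] y_def xs_def by simp
  have msq: "m^2 \<le> 1" using m0 mle1 by (simp add: power_le_one)
  have L1: "ln ((1 - m\<^sup>2) * (P - 1)) / 2 \<le> P / 2"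
  proof (rule ln_half_le)
    have "0 \<le> 1 - m\<^sup>2" using msq by simp
    moreover have "1 - m\<^sup>2 \<le> 1" by simp
    ultimately have h: "0 \<le> 1 - m\<^sup>2" "1 - m\<^sup>2 \<le> 1" by auto
    show "0 \<le> (1 - m\<^sup>2) * (P - 1)" using h P3 by simp
    have "(1 - m\<^sup>2) * (P - 1) \<le> 1 * (P - 1)" using h P3 by (intro mult_right_mono) auto
    thus "(1 - m\<^sup>2) * (P - 1) \<le> P" by simp
  qed
  have L2: "(2 - P) / (2 * P) * y\<^sup>2 = - a * Y^2" using p3 unfolding Y_def a P_def by (simp add: field_simps)
  have L3: "- (lam * m ^ k / P * sqrt (2 * (P - 1) / P) * y) \<le> b * Y"
  proof -
    have "- (lam * m ^ k / P * sqrt (2 * (P - 1) / P) * y) = B * (sqrt (2 * (P - 1) / P) / P) * Y"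
      unfolding B_def Y_def by (simp add: field_simps)
    also have "\<dots> \<le> C0 * (sqrt (2 * (P - 1) / P) / P) * Y"
      using Ble c0 P3 Ypos by (intro mult_right_mono) (auto intro: mult_right_mono order.trans[OF real_sqrt_ge_zero])
    also have "\<dots> = b * Y" unfolding b P_def by simp
    finally show ?thesis .
  qed
  have L4: "lam\<^sup>2 * m ^ (2*k - 2) / (2 * P\<^sup>2) * (P + (1 - P) * m\<^sup>2) \<ge> 0"
  proof -
    have "(P - 1) * m^2 \<le> P - 1" using msq P3 by (simp add: mult_left_le)
    hence "P + (1 - P) * m\<^sup>2 \<ge> 0" by (simp add: algebra_simps)
    thus ?thesis using m0 by simp
  qed
  have "R \<le> P/2 - a * Y^2 + b * Y" unfolding R_def using L1 L2 L3 L4 by linarith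
  also have "\<dots> \<le> -1"
  proof (rule quad_bound[OF a0 b0])
    show "P \<ge> 0" using P3 by simp
    show "Y \<ge> 1 + 2*b/a + (P+2)/a" using YY0 Y0 real_sqrt_ge_zero[of 2] unfolding P_def by linarith
  qed
  finally have "R - I \<le> -1" using I0 by linarith
  thus ?thesis unfolding Seq by simp
qed


theorem proposition4p3:
  fixes p k :: nat
  assumes "p \<ge> 3" and "k \<ge> 1"
  shows "\<exists>lamc > 0. \<forall>lam \<ge> lamc.
           (SUP m \<in> {0..m_lambda p k lam}. S_pk p k lam m (x_star p k lam)) < 0"
proof -
  note p3 = assms(1) and k1 = assms(2)
  define P where "P = real p"
  have P3: "P \<ge> 3" using p3 by (simp add: P_def)
  define C0 where "C0 = (real p - 2) * sqrt (real p) / sqrt (real p - 1)"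
  define a where "a = (real p - 2) / (2 * real p)"
  define b where "b = C0 * sqrt (2 * (real p - 1) / real p) / real p"
  define D where "D = sqrt (2 * real p * (real p - 1))"
  define Y0 where "Y0 = 1 + sqrt 2 + 2*b/a + (real p+2)/a"
  define T where "T = real k * (Y0 * D / real p + C0)"
  have a0: "a > 0" using p3 by (simp add: a_def)
  have C00: "C0 > 0" using p3 by (simp add: C0_def)
  have b0: "b \<ge> 0" using C00 p3 by (simp add: b_def)
  have Y0pos: "Y0 \<ge> 0" using a0 b0 unfolding Y0_def by simp
  have D0: "D \<ge> 0" using p3 by (simp add: D_def)
  have T0: "T \<ge> 0" using Y0pos D0 C00 unfolding T_def by simp
  define d where "d = min (1/2) (P / (4 * (T+1)^2))"
  have d0: "d > 0" using P3 T0 unfolding d_def by simp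
  have d1: "d \<le> 1/2" unfolding d_def by simp
  have sd0: "sqrt d > 0" using d0 by simp
  define lamc where "lamc = sqrt p * 2^k / sqrt d + 1"
  have "sqrt p * 2^k / sqrt d \<ge> 0" using sd0 by simp
  hence lamc0: "lamc > 0" unfolding lamc_def by linarith
  have "\<forall>lam \<ge> lamc. (SUP m \<in> {0..m_lambda p k lam}. S_pk p k lam m (x_star p k lam)) < 0"
  proof (intro allI impI)
    fix lam assume lam: "lam \<ge> lamc"
    have lam0: "lam > 0" using lam lamc0 by linarith
    have "lam > sqrt p * 2^k / sqrt d" using lam unfolding lamc_def by linarith
    from mstar_ge[OF p3 k1 d0 d1 this]
    have M1: "m_star p k lam \<ge> sqrt (1-d)" and M2: "m_star p k lam < 1"
      and M3: "lam * (m_star p k lam)^k = sqrt p * (m_star p k lam)^2 / sqrt (1 - (m_star p k lam)^2)"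
      by auto
    define M where "M = m_star p k lam"
    have Mge: "M \<ge> sqrt (1-d)" using M1 by (simp add: M_def)
    have "sqrt (1-d) \<ge> 0" using d1 by simp
    hence "M^2 \<ge> (sqrt (1-d))^2" using Mge by (intro power_mono) auto
    hence M2d: "M^2 \<ge> 1 - d" using d1 by simp
    have "sqrt (1-d) > 0" using d1 by simp
    hence M0: "M > 0" using Mge by linarith
    have "M^2 < 1^2" using M2 M0 unfolding M_def by (intro power_strict_mono) auto
    hence q0: "1 - M^2 > 0" by simp
    have q1: "1 - M^2 \<le> d" using M2d by simp
    have "sqrt (1 - M^2) \<le> sqrt d" using q1 by simp
    also have "\<dots> \<le> sqrt (P / (4 * (T+1)^2))" unfolding d_def by simp
    also have "\<dots> = sqrt P / (2 * (T+1))" using T0 by (simp add: real_sqrt_divide real_sqrt_mult)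
    finally have sq: "sqrt (1 - M^2) \<le> sqrt P / (2 * (T+1))" .
    have sq0: "sqrt (1 - M^2) > 0" using q0 by simp
    have sP: "sqrt P > 0" using P3 by simp
    have "M^2 \<ge> 1/2" using M2d d1 by simp
    hence "sqrt P * M^2 \<ge> sqrt P * (1/2)" using sP by (intro mult_left_mono) auto
    hence h1: "sqrt P * M^2 / sqrt (1 - M^2) \<ge> (sqrt P / 2) / sqrt (1 - M^2)"
      using sq0 by (intro divide_right_mono) auto
    have "0 < sqrt P / (2 * (T+1)) * sqrt (1 - M^2)" using sP sq0 T0 by simp
    from divide_left_mono[OF sq _ this, of "sqrt P / 2"]
    have h2: "(sqrt P / 2) / sqrt (1 - M^2) \<ge> (sqrt P / 2) / (sqrt P / (2 * (T+1)))"
      using sP by simp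
    note h1 h2
    moreover have "(sqrt P / 2) / (sqrt P / (2 * (T+1))) = T + 1" using sP T0 by (simp add: field_simps)
    ultimately have "sqrt P * M^2 / sqrt (1 - M^2) \<ge> T" by linarith
    hence Abig: "lam * m_star p k lam ^ k \<ge> T" using M3 unfolding M_def P_def by simp
    have "(SUP m \<in> {0..m_lambda p k lam}. S_pk p k lam m (x_star p k lam)) \<le> ereal (-1)"
    proof (rule SUP_least)
      fix m assume "m \<in> {0..m_lambda p k lam}"
      from S_bound[OF p3 k1 lam0 this C0_def a_def b_def D_def Y0_def] Abig
      show "S_pk p k lam m (x_star p k lam) \<le> ereal (-1)" unfolding T_def by simp
    qed
    also have "\<dots> < 0" by simp
    finally show "(SUP m \<in> {0..m_lambda p k lam}. S_pk p k lam m (x_star p k lam)) < 0" .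
  qed
  thus ?thesis using lamc0 by blast
qed

end
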